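(* Let $X_1, X_2, \dots$ be i.i.d. $N(\mu, \sigma^2)$ with $\sigma^2>0$, and for $j\ge1$ let $\bar X_j = \frac1j\sum_{t=1}^j X_t$ and $S(j) = \sqrt{\frac1j\sum_{t=1}^j (X_t - \bar X_j)^2}$. Then for every $\epsilon > 0$, $$\frac{ \mathbb{P}\left( \bar X_j + S(j)\sqrt{k^{2/j} - 1} < \mu - \epsilon \text{ for some } 2 \leq j \leq k \right) }{ 1/k } \to \infty \quad \text{as } k \to \infty.$$ In particular, the probability on the left is not $o(1/k)$. *)

theory Defs
  imports "HOL-Probability.Probability"
begin

definition sample_mean :: "(nat \<Rightarrow> 'a \<Rightarrow> real) \<Rightarrow> nat \<Rightarrow> 'a \<Rightarrow> real" where
  "sample_mean X j \<omega> = (\<Sum>t=1..j. X t \<omega>) / real j"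

definition sample_sd :: "(nat \<Rightarrow> 'a \<Rightarrow> real) \<Rightarrow> nat \<Rightarrow> 'a \<Rightarrow> real" where
  "sample_sd X j \<omega> = sqrt ((\<Sum>t=1..j. (X t \<omega> - sample_mean X j \<omega>)\<^sup>2) / real j)"

end

theory Submission imports Defs begin

lemma interval_lb:
  fixes g :: "real \<Rightarrow> real"
  assumes P: "prob_space M" and d: "distributed M lborel Y (\<lambda>x. ennreal (g x))"
    and lu: "l \<le> u" and m: "0 \<le> m" and bnd: "\<And>x. l \<le> x \<Longrightarrow> x \<le> u \<Longrightarrow> m \<le> g x"
  shows "m * (u - l) \<le> measure M (Y -` {l..<u} \<inter> space M)"
proof -
  interpret prob_space M by fact
  have "emeasure M (Y -` {l..<u} \<inter> space M) = (\<integral>\<^sup>+x. ennreal (g x) * indicator {l..<u} x \<partial>lborel)"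
    using distributed_emeasure[OF d] by simp
  also have "\<dots> \<ge> (\<integral>\<^sup>+x. ennreal m * indicator {l..<u} x \<partial>lborel)"
    by (intro nn_integral_mono) (auto simp: indicator_def intro!: ennreal_leI bnd)
  moreover have "(\<integral>\<^sup>+x. ennreal m * indicator {l..<u} x \<partial>lborel) = ennreal (m * (u - l))"
    using lu m by (simp add: nn_integral_cmult_indicator ennreal_mult)
  ultimately have "ennreal (m * (u - l)) \<le> emeasure M (Y -` {l..<u} \<inter> space M)" by simp
  then show ?thesis by (simp add: emeasure_eq_measure)
qed

lemma sm_meas: "(\<And>t. t \<ge> 1 \<Longrightarrow> X t \<in> borel_measurable M) \<Longrightarrow> sample_mean X j \<in> borel_measurable M"
  unfolding sample_mean_def[abs_def] by (intro borel_measurable_divide borel_measurable_sum) auto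

lemma sd_meas:
  assumes "\<And>t. t \<ge> 1 \<Longrightarrow> X t \<in> borel_measurable M"
  shows "sample_sd X j \<in> borel_measurable M"
proof -
  have [measurable]: "sample_mean X j \<in> borel_measurable M" using sm_meas assms by blast
  have [measurable]: "t \<in> {1..j} \<Longrightarrow> X t \<in> borel_measurable M" for t using assms by auto
  show ?thesis unfolding sample_sd_def[abs_def] by measurable
qed

lemma two_sm: "sample_mean X 2 w = (X 1 w + X 2 w) / 2"
  unfolding sample_mean_def by (simp add: numeral_2_eq_2)
lemma two_sd: "sample_sd X 2 w = \<bar>X 1 w - X 2 w\<bar> / 2"
proof -
  have "(\<Sum>t=1..2. (X t w - sample_mean X 2 w)\<^sup>2) / real 2 = ((X 1 w - X 2 w)/2)\<^sup>2"
    unfolding two_sm by (simp add: numeral_2_eq_2 power2_eq_square field_simps)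
  then show ?thesis unfolding sample_sd_def by simp
qed

lemma dens_lb:
  assumes "\<sigma> > 0" "\<epsilon> > 0" "\<mu> - \<epsilon> - 2 \<le> x" "x \<le> \<mu> - \<epsilon> - 1"
  shows "normal_density \<mu> \<sigma> (\<mu> - \<epsilon> - 2) \<le> normal_density \<mu> \<sigma> x"
proof -
  have "(x - \<mu>)\<^sup>2 \<le> (\<mu> - \<epsilon> - 2 - \<mu>)\<^sup>2"
  proof -
    have "\<bar>x - \<mu>\<bar> \<le> \<bar>\<mu> - \<epsilon> - 2 - \<mu>\<bar>" using assms by simp
    then show ?thesis by (simp only: abs_le_square_iff)
  qed
  then have "-(\<mu> - \<epsilon> - 2 - \<mu>)\<^sup>2/ (2 * \<sigma>\<^sup>2) \<le> -(x - \<mu>)\<^sup>2/ (2 * \<sigma>\<^sup>2)"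
    using assms by (intro divide_right_mono) auto
  then show ?thesis unfolding normal_density_def
    by (intro mult_left_mono) auto
qed

theorem proposition2:
  fixes M :: "'a measure" and X :: "nat \<Rightarrow> 'a \<Rightarrow> real"
    and \<mu> \<sigma> \<epsilon> :: real
  assumes "prob_space M"
    and "\<sigma> > 0"
    and "prob_space.indep_vars M (\<lambda>_. borel) X {1..}"
    and "\<And>t. t \<ge> 1 \<Longrightarrow> distributed M lborel (X t) (normal_density \<mu> \<sigma>)"
    and "\<epsilon> > 0"
  shows "filterlim
           (\<lambda>k::nat. measure M {\<omega> \<in> space M. \<exists>j\<in>{2..k}.
               sample_mean X j \<omega> + sample_sd X j \<omega> * sqrt (real k powr (2 / real j) - 1) < \<mu> - \<epsilon>}
             / (1 / real k))
           at_top sequentially"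
proof -
  interpret prob_space M by fact
  have Xm: "X t \<in> borel_measurable M" if "t \<ge> 1" for t
    using distributed_measurable[OF assms(4)[OF that]] by simp
  have [measurable]: "sample_mean X j \<in> borel_measurable M" for j using sm_meas Xm by blast
  have [measurable]: "sample_sd X j \<in> borel_measurable M" for j using sd_meas Xm by blast
  define B where "B k = {\<omega> \<in> space M. \<exists>j\<in>{2..k}.
               sample_mean X j \<omega> + sample_sd X j \<omega> * sqrt (real k powr (2 / real j) - 1) < \<mu> - \<epsilon>}" for k
  have Bs: "B k \<in> sets M" for k unfolding B_def by measurable
  define m where "m = normal_density \<mu> \<sigma> (\<mu> - \<epsilon> - 2)"
  have m0: "m > 0" unfolding m_def using normal_density_pos assms(2) by blast
  define c where "c = \<mu> - \<epsilon> - 1"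
  have single: "m * (u - l) \<le> prob (X t -` {l..<u} \<inter> space M)"
    if "t \<ge> 1" "c - 1 \<le> l" "l \<le> u" "u \<le> c" for t l u
    using interval_lb[OF assms(1) assms(4)[OF that(1)], of l u m] that m0 dens_lb[OF assms(2,5)]
    unfolding m_def c_def by force
  have key: "m\<^sup>2 / real (nat \<lceil>sqrt (real k)\<rceil>) \<le> prob (B k)" if k2: "k \<ge> 2" for k
  proof -
    define N where "N = nat \<lceil>sqrt (real k)\<rceil>"
    have sk: "sqrt (real k) \<ge> 1" using k2 by simp
    have NN: "real N \<ge> sqrt (real k)" unfolding N_def by linarith
    have N0: "real N > 0" using NN sk by linarith
    define I where "I i = {c - real (i+1) / N ..< c - real i / N}" for i
    define E where "E i = X 1 -` I i \<inter> space M \<inter> (X 2 -` I i \<inter> space M)" for i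
    have Es: "E i \<in> sets M" for i unfolding E_def I_def using Xm[of 1] Xm[of 2] by measurable
    have Ilen: "c - 1 \<le> c - real (i+1) / N" "c - real (i+1) / N \<le> c - real i / N" "c - real i / N \<le> c"
      if "i < N" for i
      using that N0 by (auto simp: field_simps)
    have PE: "(m / N)\<^sup>2 \<le> prob (E i)" if "i < N" for i
    proof -
      have "prob (E i) = (\<Prod>t\<in>{1,2}. prob (X t -` I i \<inter> space M))"
        using indep_varsD[OF assms(3), of "{1,2::nat}" "\<lambda>_. I i"] unfolding E_def I_def
        by (simp add: Int_assoc)
      also have "\<dots> = prob (X 1 -` I i \<inter> space M) * prob (X 2 -` I i \<inter> space M)" by simp
      also have "\<dots> \<ge> (m * (1 / N)) * (m * (1/N))"
      proof (intro mult_mono)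
        have "m * (1/N) = m * ((c - real i / N) - (c - real (i+1) / N))" using N0 by (simp add: field_simps)
        moreover have "m * ((c - real i / N) - (c - real (i+1) / N)) \<le> prob (X t -` I i \<inter> space M)"
          if "t \<ge> 1" for t
          unfolding I_def by (rule single) (use Ilen[OF \<open>i < N\<close>] that in auto)
        ultimately show "m * (1/N) \<le> prob (X 1 -` I i \<inter> space M)" "m * (1/N) \<le> prob (X 2 -` I i \<inter> space M)"
          by auto
      qed (use m0 N0 in auto)
      finally show ?thesis by (simp add: power2_eq_square)
    qed
    have disj: "disjoint_family_on E {..<N}"
    unfolding disjoint_family_on_def
    proof (intro ballI impI)
      fix i j assume "i \<in> {..<N}" "j \<in> {..<N}" "i \<noteq> j"
      have "I i \<inter> I j = {}"
      proof (rule ccontr)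
        assume "I i \<inter> I j \<noteq> {}"
        then obtain x where "x \<in> I i" "x \<in> I j" by blast
        then have "real j / N < real (i+1) / N" "real i / N < real (j+1) / N"
          unfolding I_def by auto
        then have "real j < real (i+1)" "real i < real (j+1)" using N0 by (auto simp: divide_less_cancel)
        then show False using \<open>i \<noteq> j\<close> by linarith
      qed
      then show "E i \<inter> E j = {}" unfolding E_def by auto
    qed
    have sub: "(\<Union>i<N. E i) \<subseteq> B k"
    proof
      fix \<omega> assume "\<omega> \<in> (\<Union>i<N. E i)"
      then obtain i where i: "i < N" "\<omega> \<in> E i" by auto
      let ?l = "c - real (i+1) / N" and ?u = "c - real i / N"
      have x: "?l \<le> X 1 \<omega>" "X 1 \<omega> < ?u" "?l \<le> X 2 \<omega>" "X 2 \<omega> < ?u" "\<omega> \<in> space M"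
        using i(2) unfolding E_def I_def by auto
      have ul: "?u - ?l = 1 / N" using N0 by (simp add: field_simps)
      have d: "\<bar>X 1 \<omega> - X 2 \<omega>\<bar> \<le> 1 / N" using x ul by linarith
      have sq: "sqrt (real k - 1) \<le> N"
        using NN real_sqrt_le_mono[of "real k - 1" "real k"] by linarith
      have "\<bar>X 1 \<omega> - X 2 \<omega>\<bar> / 2 * sqrt (real k - 1) \<le> (1 / N) / 2 * N"
        using d sq k2 by (intro mult_mono divide_right_mono) auto
      also have "\<dots> = 1/2" using N0 by simp
      finally have h: "\<bar>X 1 \<omega> - X 2 \<omega>\<bar> / 2 * sqrt (real k - 1) \<le> 1/2" .
      have "X 1 \<omega> < c" "X 2 \<omega> < c" using x Ilen[OF i(1)] by linarith+
      then have "(X 1 \<omega> + X 2 \<omega>) / 2 < c" by simp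
      then have "sample_mean X 2 \<omega> + sample_sd X 2 \<omega> * sqrt (real k powr (2 / real 2) - 1) < \<mu> - \<epsilon>"
      proof -
        have "sample_mean X 2 \<omega> + sample_sd X 2 \<omega> * sqrt (real k powr (2 / real 2) - 1)
           = (X 1 \<omega> + X 2 \<omega>) / 2 + \<bar>X 1 \<omega> - X 2 \<omega>\<bar> / 2 * sqrt (real k - 1)"
          using k2 by (simp add: two_sm two_sd)
        then show ?thesis using h \<open>(X 1 \<omega> + X 2 \<omega>) / 2 < c\<close> c_def by linarith
      qed
      then show "\<omega> \<in> B k" unfolding B_def using x k2 by (auto intro!: bexI[of _ 2])
    qed
    have "m\<^sup>2 / real N = (\<Sum>i<N. (m / N)\<^sup>2)" using N0 by (simp add: power2_eq_square)
    also have "\<dots> \<le> (\<Sum>i<N. prob (E i))" using PE by (intro sum_mono) auto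
    also have "\<dots> = prob (\<Union>i<N. E i)"
      using disj Es by (intro measure_finite_Union[symmetric]) auto
    also have "\<dots> \<le> prob (B k)" using sub Bs by (intro finite_measure_mono)
    finally show ?thesis unfolding N_def .
  qed
  have lb: "m\<^sup>2 / 2 * sqrt (real k) \<le> prob (B k) / (1 / real k)" if k2: "k \<ge> 2" for k
  proof -
    define N where "N = nat \<lceil>sqrt (real k)\<rceil>"
    have sk: "sqrt (real k) \<ge> 1" using k2 by simp
    have NN: "real N \<le> 2 * sqrt (real k)" unfolding N_def using sk by linarith
    have N0: "real N > 0" using sk unfolding N_def by linarith
    have "m\<^sup>2 / 2 * sqrt (real k) = m\<^sup>2 / (2 * sqrt (real k)) * real k"
      using sk by (simp add: field_simps)
    also have "\<dots> \<le> m\<^sup>2 / real N * real k"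
      using NN N0 m0 sk by (intro mult_right_mono divide_left_mono) auto
    also have "\<dots> \<le> prob (B k) * real k"
      using key[OF k2] unfolding N_def by (intro mult_right_mono) auto
    finally show ?thesis by simp
  qed
  have "filterlim (\<lambda>k::nat. m\<^sup>2 / 2 * sqrt (real k)) at_top sequentially"
    using m0 by (intro filterlim_tendsto_pos_mult_at_top[OF tendsto_const]
        filterlim_compose[OF sqrt_at_top filterlim_real_sequentially]) auto
  then have "filterlim (\<lambda>k. prob (B k) / (1 / real k)) at_top sequentially"
    by (rule filterlim_at_top_mono) (use lb in \<open>auto simp: eventually_sequentially\<close>)
  then show ?thesis unfolding B_def .
qed

end
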